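(* Let $G$ be a connected plane graph on $n$ vertices whose infinite face is bounded by a simple triangle, and let $\mathcal{K}$ be its component tree with the cost function defined below. Then there is a constant $c$ (independent of $G$) such that for every integer $w\ge 1$ there exists an integer $\delta\in[0,w)$ such that the total cost of all nodes of $\mathcal{K}$ at depths $\delta,\delta+w,\delta+2w,\ldots$ is at most $c\,n/w$.
   Context: The face-vertex incidence graph $FV(G)$ has a node for every vertex and every face of $G$, with an edge between a vertex $v$ and a face $f$ whenever $v$ is incident to $f$. Run a breadth-first search in $FV(G)$ from the node of the infinite face; the level of a face or vertex is its depth in this BFS tree (so the infinite face has level 0). For each even integer $i\ge 2$, a level-$i$ component is a connected component of the subgraph of $G$ induced by the faces of level at least $i$. The component tree $\mathcal{K}$ has the level components as nodes, where a level component $K$ is an ancestor of $K'$ if the set of faces of $K$ contains the set of faces of $K'$; its root is the component consisting of all faces of $G$ except the infinite face. The boundary of a component $K$ is the set of edges incident both to a face in $K$ and to a face not in $K$; it is a simple cycle $C_K$, and boundaries of distinct components are edge-disjoint. The cost of a node $K$ is the length (number of edges) of $C_K$. *)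

theory Defs
  imports Complex_Main
begin

text \<open>A connected plane graph is encoded combinatorially as a connected planar
combinatorial map on a finite set D of darts (half-edges, labelled by naturals):
alpha is a fixed-point-free involution (the two halves of an edge),
sigma is the rotation of darts around their tail vertex.\<close>

definition orb :: "(nat \<Rightarrow> nat) \<Rightarrow> nat \<Rightarrow> nat set" where
  "orb f x = {(f ^^ k) x | k. True}"

definition cm_verts :: "nat set \<Rightarrow> (nat \<Rightarrow> nat) \<Rightarrow> nat set set" where
  "cm_verts D \<sigma> = {orb \<sigma> d | d. d \<in> D}"

definition cm_edges :: "nat set \<Rightarrow> (nat \<Rightarrow> nat) \<Rightarrow> nat set set" where
  "cm_edges D \<alpha> = {orb \<alpha> d | d. d \<in> D}"

definition cm_faces :: "nat set \<Rightarrow> (nat \<Rightarrow> nat) \<Rightarrow> (nat \<Rightarrow> nat) \<Rightarrow> nat set set" where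
  "cm_faces D \<alpha> \<sigma> = {orb (\<sigma> \<circ> \<alpha>) d | d. d \<in> D}"

definition comb_map :: "nat set \<Rightarrow> (nat \<Rightarrow> nat) \<Rightarrow> (nat \<Rightarrow> nat) \<Rightarrow> bool" where
  "comb_map D \<alpha> \<sigma> \<longleftrightarrow> finite D \<and> bij_betw \<alpha> D D \<and> bij_betw \<sigma> D D
     \<and> (\<forall>d\<in>D. \<alpha> d \<noteq> d \<and> \<alpha> (\<alpha> d) = d)"

definition cm_connected :: "nat set \<Rightarrow> (nat \<Rightarrow> nat) \<Rightarrow> (nat \<Rightarrow> nat) \<Rightarrow> bool" where
  "cm_connected D \<alpha> \<sigma> \<longleftrightarrow>
     (\<forall>d\<in>D. \<forall>d'\<in>D. (d, d') \<in> ({(x, \<alpha> x) | x. x \<in> D} \<union> {(x, \<sigma> x) | x. x \<in> D})\<^sup>*)"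

definition cm_planar :: "nat set \<Rightarrow> (nat \<Rightarrow> nat) \<Rightarrow> (nat \<Rightarrow> nat) \<Rightarrow> bool" where
  "cm_planar D \<alpha> \<sigma> \<longleftrightarrow>
     int (card (cm_verts D \<sigma>)) - int (card (cm_edges D \<alpha>)) + int (card (cm_faces D \<alpha> \<sigma>)) = 2"

definition cm_simple :: "nat set \<Rightarrow> (nat \<Rightarrow> nat) \<Rightarrow> (nat \<Rightarrow> nat) \<Rightarrow> bool" where
  "cm_simple D \<alpha> \<sigma> \<longleftrightarrow>
     (\<forall>d\<in>D. orb \<sigma> d \<noteq> orb \<sigma> (\<alpha> d)) \<and>
     (\<forall>d\<in>D. \<forall>d'\<in>D. orb \<sigma> d = orb \<sigma> d' \<and> orb \<sigma> (\<alpha> d) = orb \<sigma> (\<alpha> d') \<longrightarrow> d = d')"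

text \<open>A connected simple plane graph with designated infinite face f0 bounded by a simple
triangle (face of length 3 whose three corners are distinct vertices).\<close>
definition plane_graph_tri :: "nat set \<Rightarrow> (nat \<Rightarrow> nat) \<Rightarrow> (nat \<Rightarrow> nat) \<Rightarrow> nat set \<Rightarrow> bool" where
  "plane_graph_tri D \<alpha> \<sigma> f0 \<longleftrightarrow>
     comb_map D \<alpha> \<sigma> \<and> cm_connected D \<alpha> \<sigma> \<and> cm_planar D \<alpha> \<sigma> \<and> cm_simple D \<alpha> \<sigma> \<and>
     f0 \<in> cm_faces D \<alpha> \<sigma> \<and> card f0 = 3 \<and> card (orb \<sigma> ` f0) = 3"

text \<open>Face-vertex incidence graph FV(G); nodes Inl v (vertex), Inr f (face).\<close>
definition fv_rel :: "nat set \<Rightarrow> (nat \<Rightarrow> nat) \<Rightarrow> (nat \<Rightarrow> nat) \<Rightarrow> (nat set + nat set) rel" where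
  "fv_rel D \<alpha> \<sigma> =
     (let R = {(Inl v, Inr f) | v f. v \<in> cm_verts D \<sigma> \<and> f \<in> cm_faces D \<alpha> \<sigma> \<and> v \<inter> f \<noteq> {}}
      in R \<union> R\<inverse>)"

definition fv_level :: "nat set \<Rightarrow> (nat \<Rightarrow> nat) \<Rightarrow> (nat \<Rightarrow> nat) \<Rightarrow> nat set \<Rightarrow> nat set + nat set \<Rightarrow> nat" where
  "fv_level D \<alpha> \<sigma> f0 x = (LEAST k. (Inr f0, x) \<in> fv_rel D \<alpha> \<sigma> ^^ k)"

definition faces_ge :: "nat set \<Rightarrow> (nat \<Rightarrow> nat) \<Rightarrow> (nat \<Rightarrow> nat) \<Rightarrow> nat set \<Rightarrow> nat \<Rightarrow> nat set set" where
  "faces_ge D \<alpha> \<sigma> f0 i = {f \<in> cm_faces D \<alpha> \<sigma>. fv_level D \<alpha> \<sigma> f0 (Inr f) \<ge> i}"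

text \<open>Two faces of level >= i lie in the same component of the subgraph induced by these
faces iff they are linked by a chain of such faces, consecutive ones sharing a vertex.\<close>
definition share_rel :: "nat set \<Rightarrow> (nat \<Rightarrow> nat) \<Rightarrow> (nat \<Rightarrow> nat) \<Rightarrow> nat set \<Rightarrow> nat \<Rightarrow> nat set rel" where
  "share_rel D \<alpha> \<sigma> f0 i = {(f, g). f \<in> faces_ge D \<alpha> \<sigma> f0 i \<and> g \<in> faces_ge D \<alpha> \<sigma> f0 i \<and>
       (\<exists>v \<in> cm_verts D \<sigma>. v \<inter> f \<noteq> {} \<and> v \<inter> g \<noteq> {})}"

definition level_comp :: "nat set \<Rightarrow> (nat \<Rightarrow> nat) \<Rightarrow> (nat \<Rightarrow> nat) \<Rightarrow> nat set \<Rightarrow> nat \<Rightarrow> nat set \<Rightarrow> nat set set" where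
  "level_comp D \<alpha> \<sigma> f0 i f = {g \<in> faces_ge D \<alpha> \<sigma> f0 i. (f, g) \<in> (share_rel D \<alpha> \<sigma> f0 i)\<^sup>*}"

text \<open>Nodes of the component tree (identified by their face sets).\<close>
definition comp_tree_nodes :: "nat set \<Rightarrow> (nat \<Rightarrow> nat) \<Rightarrow> (nat \<Rightarrow> nat) \<Rightarrow> nat set \<Rightarrow> nat set set set" where
  "comp_tree_nodes D \<alpha> \<sigma> f0 =
     {level_comp D \<alpha> \<sigma> f0 i f | i f. even i \<and> i \<ge> 2 \<and> f \<in> faces_ge D \<alpha> \<sigma> f0 i}"

text \<open>Depth of a node = number of proper ancestors (components with strictly larger face set).\<close>
definition node_depth :: "nat set \<Rightarrow> (nat \<Rightarrow> nat) \<Rightarrow> (nat \<Rightarrow> nat) \<Rightarrow> nat set \<Rightarrow> nat set set \<Rightarrow> nat" where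
  "node_depth D \<alpha> \<sigma> f0 K = card {K' \<in> comp_tree_nodes D \<alpha> \<sigma> f0. K \<subset> K'}"

definition node_cost :: "nat set \<Rightarrow> (nat \<Rightarrow> nat) \<Rightarrow> (nat \<Rightarrow> nat) \<Rightarrow> nat set set \<Rightarrow> nat" where
  "node_cost D \<alpha> \<sigma> K = card {e \<in> cm_edges D \<alpha>.
      (\<exists>f \<in> K. e \<inter> f \<noteq> {}) \<and> (\<exists>g \<in> cm_faces D \<alpha> \<sigma> - K. e \<inter> g \<noteq> {})}"

end

theory Submission
  imports Defs
begin


lemma funpow_in: "bij_betw f D D \<Longrightarrow> x \<in> D \<Longrightarrow> (f ^^ k) x \<in> D"
  by (induction k) (auto simp: bij_betw_apply)

lemma orb_sub:
  assumes "bij_betw f D D" "x \<in> D" shows "orb f x \<subseteq> D"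
proof
  fix z assume "z \<in> orb f x"
  then obtain k where "z = (f ^^ k) x" unfolding orb_def by blast
  then show "z \<in> D" using funpow_in[OF assms] by simp
qed

lemma cancel_aux:
  assumes "inj_on f D" "bij_betw f D D" "x \<in> D" "y \<in> D" "(f ^^ i) x = (f ^^ i) y"
  shows "x = y"
  using assms(5)
proof (induction i)
  case (Suc i)
  have "(f ^^ i) x \<in> D" "(f ^^ i) y \<in> D" using funpow_in assms by metis+
  with Suc.prems have "(f ^^ i) x = (f ^^ i) y" using assms(1) by (auto dest: inj_onD)
  then show ?case by (rule Suc.IH)
qed simp

lemma period:
  assumes "finite D" "bij_betw f D D" "x \<in> D"
  shows "\<exists>n>0. (f ^^ n) x = x"
proof -
  have "\<not> inj_on (\<lambda>k. (f ^^ k) x) {0..card D}"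
  proof
    assume "inj_on (\<lambda>k. (f ^^ k) x) {0..card D}"
    then have c1: "card ((\<lambda>k. (f ^^ k) x) ` {0..card D}) = card D + 1" by (simp add: card_image)
    have "(\<lambda>k. (f ^^ k) x) ` {0..card D} \<subseteq> D" using funpow_in[OF assms(2,3)] by blast
    then have "card ((\<lambda>k. (f ^^ k) x) ` {0..card D}) \<le> card D" by (rule card_mono[OF assms(1)])
    with c1 show False by linarith
  qed
  then obtain i j where ij: "i \<noteq> j" "(f ^^ i) x = (f ^^ j) x" by (meson inj_onI)
  have gen: "\<exists>n>0. (f ^^ n) x = x" if "i < j" "(f ^^ i) x = (f ^^ j) x" for i j
  proof -
    have "(f ^^ i) x = (f ^^ i) ((f ^^ (j - i)) x)"
    proof -
      have jj: "i + (j - i) = j" using that by simp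
      have "(f ^^ (i + (j - i))) x = (f ^^ i) ((f ^^ (j - i)) x)" by (simp only: funpow_add o_apply)
      then show ?thesis using that(2) unfolding jj by simp
    qed
    then have "x = (f ^^ (j - i)) x"
      using cancel_aux[OF bij_betw_imp_inj_on[OF assms(2)] assms(2) assms(3) funpow_in[OF assms(2,3)]] by blast
    then show ?thesis using that by (intro exI[of _ "j - i"]) auto
  qed
  show ?thesis
  proof (cases "i < j")
    case True then show ?thesis using gen[of i j] ij by blast
  next
    case False then have "j < i" using ij(1) by simp
    then show ?thesis using gen[of j i] ij(2) by simp
  qed
qed

lemma period_mult: "(f ^^ n) x = x \<Longrightarrow> (f ^^ (n * k)) x = x"
  by (induction k) (auto simp: funpow_add)

lemma orb_self: "x \<in> orb f x"
  unfolding orb_def by (auto intro: exI[of _ 0])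

lemma orb_step: "f x \<in> orb f x"
  unfolding orb_def by (auto intro!: exI[of _ 1])

lemma orb_eq:
  assumes "finite D" "bij_betw f D D" "x \<in> D" "y \<in> orb f x"
  shows "orb f y = orb f x"
proof -
  obtain k where k: "y = (f ^^ k) x" using assms(4) unfolding orb_def by blast
  obtain n where n: "n > 0" "(f ^^ n) x = x" using period[OF assms(1-3)] by blast
  show ?thesis
  proof
    show "orb f y \<subseteq> orb f x"
    proof
      fix z assume "z \<in> orb f y"
      then obtain m where "z = (f ^^ m) y" unfolding orb_def by blast
      then have "z = (f ^^ (m + k)) x" unfolding k by (simp add: funpow_add)
      then show "z \<in> orb f x" unfolding orb_def by blast
    qed
    show "orb f x \<subseteq> orb f y"
    proof
      fix z assume "z \<in> orb f x"
      then obtain m where m: "z = (f ^^ m) x" unfolding orb_def by blast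
      have "n * k \<ge> k" using n by simp
      have "(f ^^ (m + n * k - k)) y = (f ^^ (m + n * k)) x"
      proof -
        have "(f ^^ (m + n * k - k)) y = (f ^^ (m + n * k - k + k)) x"
          unfolding k funpow_add by simp
        also have "m + n * k - k + k = m + n * k" using \<open>n * k \<ge> k\<close> by linarith
        finally show ?thesis .
      qed
      also have "\<dots> = (f ^^ m) ((f ^^ (n*k)) x)" by (simp add: funpow_add)
      also have "\<dots> = z" using period_mult[OF n(2)] m by simp
      finally show "z \<in> orb f y" unfolding orb_def by (auto intro!: exI[of _ "m + n * k - k"])
    qed
  qed
qed

lemma orb_disj:
  assumes "finite D" "bij_betw f D D" "x \<in> D" "y \<in> D" "orb f x \<inter> orb f y \<noteq> {}"
  shows "orb f x = orb f y"
proof -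
  obtain z where z: "z \<in> orb f x" "z \<in> orb f y" using assms(5) by blast
  show ?thesis using orb_eq[OF assms(1-3) z(1)] orb_eq[OF assms(1,2,4) z(2)] by simp
qed




lemma pg_cm: "plane_graph_tri D \<alpha> \<sigma> f0 \<Longrightarrow> comb_map D \<alpha> \<sigma>"
  unfolding plane_graph_tri_def by (elim conjE) assumption
lemma pg_conn: "plane_graph_tri D \<alpha> \<sigma> f0 \<Longrightarrow> cm_connected D \<alpha> \<sigma>"
  unfolding plane_graph_tri_def by (elim conjE) assumption
lemma pg_planar: "plane_graph_tri D \<alpha> \<sigma> f0 \<Longrightarrow> cm_planar D \<alpha> \<sigma>"
  unfolding plane_graph_tri_def by (elim conjE) assumption
lemma pg_simple: "plane_graph_tri D \<alpha> \<sigma> f0 \<Longrightarrow> cm_simple D \<alpha> \<sigma>"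
  unfolding plane_graph_tri_def by (elim conjE) assumption
lemma pg_f0: "plane_graph_tri D \<alpha> \<sigma> f0 \<Longrightarrow> f0 \<in> cm_faces D \<alpha> \<sigma>"
  unfolding plane_graph_tri_def by (elim conjE) assumption
lemma pg_card: "plane_graph_tri D \<alpha> \<sigma> f0 \<Longrightarrow> card f0 = 3"
  unfolding plane_graph_tri_def by (elim conjE) assumption
lemma cm_fin: "comb_map D \<alpha> \<sigma> \<Longrightarrow> finite D"
  unfolding comb_map_def by (elim conjE) assumption
lemma cm_ba: "comb_map D \<alpha> \<sigma> \<Longrightarrow> bij_betw \<alpha> D D"
  unfolding comb_map_def by (elim conjE) assumption
lemma cm_bs: "comb_map D \<alpha> \<sigma> \<Longrightarrow> bij_betw \<sigma> D D"
  unfolding comb_map_def by (elim conjE) assumption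
lemma cm_inv: "comb_map D \<alpha> \<sigma> \<Longrightarrow> x \<in> D \<Longrightarrow> \<alpha> x \<noteq> x \<and> \<alpha> (\<alpha> x) = x"
  unfolding comb_map_def by (elim conjE) (erule bspec)
lemma simple1: "cm_simple D \<alpha> \<sigma> \<Longrightarrow> x \<in> D \<Longrightarrow> orb \<sigma> x \<noteq> orb \<sigma> (\<alpha> x)"
  unfolding cm_simple_def by (elim conjE) (erule bspec)
lemma simple2: "cm_simple D \<alpha> \<sigma> \<Longrightarrow> x \<in> D \<Longrightarrow> x' \<in> D \<Longrightarrow> orb \<sigma> x = orb \<sigma> x' \<Longrightarrow> orb \<sigma> (\<alpha> x) = orb \<sigma> (\<alpha> x') \<Longrightarrow> x = x'"
  unfolding cm_simple_def by blast

lemma phi_bij: "comb_map D \<alpha> \<sigma> \<Longrightarrow> bij_betw (\<sigma> \<circ> \<alpha>) D D"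
  by (rule bij_betw_trans[OF cm_ba cm_bs])

lemma orb_partition:
  assumes "finite D" "bij_betw f D D"
  shows "card D = (\<Sum>X \<in> {orb f d | d. d \<in> D}. card X)"
proof -
  have U: "\<Union>{orb f d | d. d \<in> D} = D"
  proof
    show "\<Union>{orb f d | d. d \<in> D} \<subseteq> D" using orb_sub[OF assms(2)] by auto
    show "D \<subseteq> \<Union>{orb f d | d. d \<in> D}"
    proof
      fix x assume "x \<in> D"
      then show "x \<in> \<Union>{orb f d | d. d \<in> D}" using orb_self[of x f] by blast
    qed
  qed
  have "pairwise disjnt {orb f d | d. d \<in> D}"
    unfolding pairwise_def disjnt_def
  proof clarify
    fix x y assume "x \<in> D" "y \<in> D" "orb f x \<noteq> orb f y"
    then show "orb f x \<inter> orb f y = {}" using orb_disj[OF assms, of x y] by blast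
  qed
  moreover have "\<And>A. A \<in> {orb f d | d. d \<in> D} \<Longrightarrow> finite A"
  proof -
    fix A assume "A \<in> {orb f d | d. d \<in> D}"
    then obtain d where "d \<in> D" "A = orb f d" by blast
    then show "finite A" using orb_sub[OF assms(2)] assms(1) by (metis finite_subset)
  qed
  ultimately have "card (\<Union>{orb f d | d. d \<in> D}) = (\<Sum>X \<in> {orb f d | d. d \<in> D}. card X)"
    by (rule card_Union_disjoint)
  then show ?thesis unfolding U .
qed

lemma edge_orb:
  assumes "comb_map D \<alpha> \<sigma>" "d \<in> D"
  shows "orb \<alpha> d = {d, \<alpha> d}"
proof -
  have inv: "\<alpha> (\<alpha> d) = d" using cm_inv[OF assms] by blast
  have "(\<alpha> ^^ k) d \<in> {d, \<alpha> d}" for k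
    by (induction k) (use inv in auto)
  then show ?thesis unfolding orb_def by (auto intro: exI[of _ 0] exI[of _ 1])
qed

lemma edges_card:
  assumes "comb_map D \<alpha> \<sigma>"
  shows "card D = 2 * card (cm_edges D \<alpha>)"
proof -
  have f: "finite D" "bij_betw \<alpha> D D" using cm_fin[OF assms] cm_ba[OF assms] by auto
  have "card D = (\<Sum>X \<in> cm_edges D \<alpha>. card X)"
    using orb_partition[OF f] unfolding cm_edges_def by simp
  also have "\<dots> = (\<Sum>X \<in> cm_edges D \<alpha>. 2)"
  proof (rule sum.cong)
    fix X assume "X \<in> cm_edges D \<alpha>"
    then obtain d where "d \<in> D" "X = orb \<alpha> d" unfolding cm_edges_def by blast
    moreover have "\<alpha> d \<noteq> d" using cm_inv[OF assms \<open>d \<in> D\<close>] by blast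
    ultimately show "card X = 2" using edge_orb[OF assms] by simp
  qed simp
  finally show ?thesis by simp
qed

lemma three_aux:
  fixes p :: "'a \<Rightarrow> 'a"
  assumes "card {d, p d, p (p d)} < 3"
  shows "p d = d \<or> p (p d) = d \<or> p (p d) = p d"
proof (rule ccontr)
  assume "\<not> (p d = d \<or> p (p d) = d \<or> p (p d) = p d)"
  then have "card {d, p d, p (p d)} = 3" by auto
  then show False using assms by simp
qed

lemma face_big:
  assumes pg: "plane_graph_tri D \<alpha> \<sigma> f0" and d: "d \<in> D"
  shows "card (orb (\<sigma> \<circ> \<alpha>) d) \<ge> 3"
proof (rule ccontr)
  let ?p = "\<sigma> \<circ> \<alpha>"
  assume nb: "\<not> 3 \<le> card (orb ?p d)"
  have cm: "comb_map D \<alpha> \<sigma>" using pg by (rule pg_cm)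
  have fD: "finite D" and ba: "bij_betw \<alpha> D D" and bs: "bij_betw \<sigma> D D"
    using cm_fin[OF cm] cm_ba[OF cm] cm_bs[OF cm] by auto
  have inv: "\<And>x. x \<in> D \<Longrightarrow> \<alpha> x \<noteq> x \<and> \<alpha> (\<alpha> x) = x" by (rule cm_inv[OF cm])
  have bp: "bij_betw ?p D D" by (rule phi_bij[OF cm])
  have sim: "cm_simple D \<alpha> \<sigma>" using pg by (rule pg_simple)
  have fin: "finite (orb ?p d)" using orb_sub[OF bp d] fD by (rule finite_subset)
  have m1: "?p d \<in> orb ?p d" by (rule orb_step)
  have m2: "?p (?p d) \<in> orb ?p d"
  proof -
    have "(?p ^^ 2) d = ?p (?p d)" by (simp add: numeral_2_eq_2)
    then show ?thesis unfolding orb_def mem_Collect_eq by (intro exI[of _ 2]) simp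
  qed
  have "{d, ?p d, ?p (?p d)} \<subseteq> orb ?p d" using m1 m2 orb_self by blast
  then have "card {d, ?p d, ?p (?p d)} \<le> card (orb ?p d)" by (rule card_mono[OF fin])
  then have "card {d, ?p d, ?p (?p d)} < 3" using nb by linarith
  then have cases: "?p d = d \<or> ?p (?p d) = d \<or> ?p (?p d) = ?p d" by (rule three_aux)
  have pdD: "?p d \<in> D" by (rule bij_betw_apply[OF bp d])
  have adD: "\<alpha> d \<in> D" by (rule bij_betw_apply[OF ba d])
  have inj: "inj_on ?p D" by (rule bij_betw_imp_inj_on[OF bp])
  have sigorb: "orb \<sigma> (\<sigma> x) = orb \<sigma> x" if "x \<in> D" for x
    using orb_eq[OF fD bs that orb_step] .
  show False
  proof -
    have c2: "?p (?p d) = d" and c1: "?p d \<noteq> d"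
    proof -
      have ne: "?p d \<noteq> d"
      proof
        assume "?p d = d"
        then have "\<sigma> (\<alpha> d) = d" by simp
        then have "orb \<sigma> d = orb \<sigma> (\<alpha> d)" using sigorb[OF adD] by simp
        then show False using simple1[OF sim d] by blast
      qed
      then show "?p d \<noteq> d" .
      show "?p (?p d) = d"
      proof -
        have "?p (?p d) \<noteq> ?p d"
        proof
          assume "?p (?p d) = ?p d"
          then have "?p d = d" using inj_onD[OF inj _ pdD d] by simp
          then show False using ne by simp
        qed
        then show ?thesis using cases ne by blast
      qed
    qed
    define d' where "d' = ?p d"
    have d'D: "d' \<in> D" using pdD d'_def by simp
    have a'D: "\<alpha> d' \<in> D" by (rule bij_betw_apply[OF ba d'D])
    have e1: "orb \<sigma> d' = orb \<sigma> (\<alpha> d)" unfolding d'_def using sigorb[OF adD] by simp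
    have "\<sigma> (\<alpha> d') = d" using c2 d'_def by simp
    then have e2: "orb \<sigma> (\<alpha> d') = orb \<sigma> d" using sigorb[OF a'D] by simp
    have "d = \<alpha> d'"
    proof -
      have "orb \<sigma> d = orb \<sigma> (\<alpha> d') \<and> orb \<sigma> (\<alpha> d) = orb \<sigma> (\<alpha> (\<alpha> d'))"
        using e1 e2 inv[OF d'D] by simp
      then show ?thesis using simple2[OF sim d a'D] by blast
    qed
    then have ad: "\<alpha> d = d'" using inv[OF d'D] by simp
    have sd: "\<sigma> d = d" using \<open>\<sigma> (\<alpha> d') = d\<close> \<open>d = \<alpha> d'\<close> by simp
    have sad: "\<sigma> (\<alpha> d) = \<alpha> d" using ad d'_def by simp
    let ?S = "{d, \<alpha> d}"
    let ?R = "{(x, \<alpha> x) | x. x \<in> D} \<union> {(x, \<sigma> x) | x. x \<in> D}"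
    have "y \<in> ?S" if "(d, y) \<in> ?R\<^sup>*" for y
      using that
    proof (induction rule: rtrancl_induct)
      case base then show ?case by simp
    next
      case (step y z)
      have zz: "z = \<alpha> y \<or> z = \<sigma> y" using step(2) by blast
      have yy: "y = d \<or> y = \<alpha> d" using step(3) by blast
      have aa: "\<alpha> (\<alpha> d) = d" using inv[OF d] by blast
      show ?case using zz
      proof
        assume "z = \<alpha> y" then show ?thesis using yy aa by auto
      next
        assume "z = \<sigma> y" then show ?thesis using yy sd sad by auto
      qed
    qed
    moreover have "\<forall>y\<in>D. (d, y) \<in> ?R\<^sup>*"
      using pg_conn[OF pg] d unfolding cm_connected_def by blast
    ultimately have "D \<subseteq> ?S" by blast
    moreover have "f0 \<subseteq> D"
    proof -
      obtain d0 where "d0 \<in> D" "f0 = orb ?p d0"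
        using pg_f0[OF pg] unfolding cm_faces_def by blast
      then show ?thesis using orb_sub[OF bp] by simp
    qed
    ultimately have "f0 \<subseteq> ?S" by (rule order_trans[rotated])
    then have "card f0 \<le> card ?S" by (rule card_mono[rotated]) simp
    also have "\<dots> \<le> 2" by (simp add: card_insert_if)
    finally show False using pg_card[OF pg] by simp
  qed
qed

lemma edges_bound:
  assumes pg: "plane_graph_tri D \<alpha> \<sigma> f0"
  shows "card (cm_edges D \<alpha>) \<le> 3 * card (cm_verts D \<sigma>)"
proof -
  have cm: "comb_map D \<alpha> \<sigma>" using pg by (rule pg_cm)
  have fD: "finite D" using cm by (rule cm_fin)
  have "card D = (\<Sum>X \<in> cm_faces D \<alpha> \<sigma>. card X)"
    using orb_partition[OF fD phi_bij[OF cm]] unfolding cm_faces_def by simp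
  also have "\<dots> \<ge> (\<Sum>X \<in> cm_faces D \<alpha> \<sigma>. 3)"
  proof (rule sum_mono)
    fix X assume "X \<in> cm_faces D \<alpha> \<sigma>"
    then obtain d where "d \<in> D" "X = orb (\<sigma> \<circ> \<alpha>) d" unfolding cm_faces_def by blast
    then show "3 \<le> card X" using face_big[OF pg] by simp
  qed
  finally have "3 * card (cm_faces D \<alpha> \<sigma>) \<le> 2 * card (cm_edges D \<alpha>)"
    using edges_card[OF cm] by simp
  moreover have "int (card (cm_verts D \<sigma>)) - int (card (cm_edges D \<alpha>)) + int (card (cm_faces D \<alpha> \<sigma>)) = 2"
    using pg_planar[OF pg] unfolding cm_planar_def .
  ultimately show ?thesis by linarith
qed




lemma fv_edge1: "v \<in> cm_verts D \<sigma> \<Longrightarrow> f \<in> cm_faces D \<alpha> \<sigma> \<Longrightarrow> v \<inter> f \<noteq> {} \<Longrightarrow> (Inl v, Inr f) \<in> fv_rel D \<alpha> \<sigma>"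
  unfolding fv_rel_def Let_def by blast

lemma fv_edge2: "v \<in> cm_verts D \<sigma> \<Longrightarrow> f \<in> cm_faces D \<alpha> \<sigma> \<Longrightarrow> v \<inter> f \<noteq> {} \<Longrightarrow> (Inr f, Inl v) \<in> fv_rel D \<alpha> \<sigma>"
  unfolding fv_rel_def Let_def by blast

lemma fv_step2:
  assumes "(Inr f0, Inr g) \<in> fv_rel D \<alpha> \<sigma> ^^ k" "v \<in> cm_verts D \<sigma>" "g \<in> cm_faces D \<alpha> \<sigma>"
    "f \<in> cm_faces D \<alpha> \<sigma>" "v \<inter> g \<noteq> {}" "v \<inter> f \<noteq> {}"
  shows "(Inr f0, Inr f) \<in> fv_rel D \<alpha> \<sigma> ^^ Suc (Suc k)"
proof -
  have "(Inr f0, Inl v) \<in> fv_rel D \<alpha> \<sigma> ^^ Suc k"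
    by (rule relpow_Suc_I[OF assms(1) fv_edge2[OF assms(2,3,5)]])
  then show ?thesis by (rule relpow_Suc_I[OF _ fv_edge1[OF assms(2,4,6)]])
qed

lemma level_adj:
  assumes "v \<in> cm_verts D \<sigma>" "g \<in> cm_faces D \<alpha> \<sigma>"
    "f \<in> cm_faces D \<alpha> \<sigma>" "v \<inter> g \<noteq> {}" "v \<inter> f \<noteq> {}"
    and lt: "fv_level D \<alpha> \<sigma> f0 (Inr g) < fv_level D \<alpha> \<sigma> f0 (Inr f)"
  shows "fv_level D \<alpha> \<sigma> f0 (Inr f) \<le> fv_level D \<alpha> \<sigma> f0 (Inr g) + 2"
proof (cases "\<exists>k. (Inr f0, Inr g) \<in> fv_rel D \<alpha> \<sigma> ^^ k")
  case True
  let ?k = "LEAST k. (Inr f0, Inr g) \<in> fv_rel D \<alpha> \<sigma> ^^ k"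
  have "(Inr f0, Inr g) \<in> fv_rel D \<alpha> \<sigma> ^^ ?k" using True by (rule LeastI_ex)
  then have "(Inr f0, Inr f) \<in> fv_rel D \<alpha> \<sigma> ^^ Suc (Suc ?k)"
    by (rule fv_step2[OF _ assms(1-5)])
  then have "(LEAST k. (Inr f0, Inr f) \<in> fv_rel D \<alpha> \<sigma> ^^ k) \<le> Suc (Suc ?k)" by (rule Least_le)
  then show ?thesis unfolding fv_level_def by simp
next
  case False
  have F2: "\<not> (\<exists>k. (Inr f0, Inr f) \<in> fv_rel D \<alpha> \<sigma> ^^ k)"
  proof
    assume "\<exists>k. (Inr f0, Inr f) \<in> fv_rel D \<alpha> \<sigma> ^^ k"
    then obtain k where "(Inr f0, Inr f) \<in> fv_rel D \<alpha> \<sigma> ^^ k" by blast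
    then have "(Inr f0, Inr g) \<in> fv_rel D \<alpha> \<sigma> ^^ Suc (Suc k)"
      by (rule fv_step2[OF _ assms(1,3,2,5,4)])
    then show False using False by blast
  qed
  have "fv_level D \<alpha> \<sigma> f0 (Inr g) = fv_level D \<alpha> \<sigma> f0 (Inr f)"
    unfolding fv_level_def using False F2 by simp
  then show ?thesis using lt by simp
qed

lemma share_sym: "(a, b) \<in> share_rel D \<alpha> \<sigma> f0 i \<Longrightarrow> (b, a) \<in> share_rel D \<alpha> \<sigma> f0 i"
  unfolding share_rel_def by blast

lemma share_rtr_sym:
  assumes "(a, b) \<in> (share_rel D \<alpha> \<sigma> f0 i)\<^sup>*"
  shows "(b, a) \<in> (share_rel D \<alpha> \<sigma> f0 i)\<^sup>*"
  using assms
proof (induction rule: rtrancl_induct)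
  case base then show ?case by simp
next
  case (step y z)
  have "(z, y) \<in> share_rel D \<alpha> \<sigma> f0 i" using step(2) by (rule share_sym)
  then show ?case using step(3) by (rule converse_rtrancl_into_rtrancl)
qed

lemma lc_eq:
  assumes hf: "(h, f) \<in> (share_rel D \<alpha> \<sigma> f0 i)\<^sup>*"
  shows "level_comp D \<alpha> \<sigma> f0 i h = level_comp D \<alpha> \<sigma> f0 i f"
proof -
  have fh: "(f, h) \<in> (share_rel D \<alpha> \<sigma> f0 i)\<^sup>*" using hf by (rule share_rtr_sym)
  show ?thesis unfolding level_comp_def
    using rtrancl_trans[OF fh] rtrancl_trans[OF hf] by blast
qed

lemma faces_finite: "comb_map D \<alpha> \<sigma> \<Longrightarrow> finite (cm_faces D \<alpha> \<sigma>)"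
  unfolding cm_faces_def Setcompr_eq_image by (rule finite_imageI[OF cm_fin])

lemma edges_finite: "comb_map D \<alpha> \<sigma> \<Longrightarrow> finite (cm_edges D \<alpha>)"
  unfolding cm_edges_def Setcompr_eq_image by (rule finite_imageI[OF cm_fin])

lemma nodes_sub: "comp_tree_nodes D \<alpha> \<sigma> f0 \<subseteq> Pow (cm_faces D \<alpha> \<sigma>)"
  unfolding comp_tree_nodes_def level_comp_def faces_ge_def by blast

lemma nodes_finite: "comb_map D \<alpha> \<sigma> \<Longrightarrow> finite (comp_tree_nodes D \<alpha> \<sigma> f0)"
  using finite_subset[OF nodes_sub finite_Pow_iff[THEN iffD2, OF faces_finite]] by blast




lemma edge_count:
  assumes pg: "plane_graph_tri D \<alpha> \<sigma> f0" and e: "e \<in> cm_edges D \<alpha>"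
  shows "card {K \<in> comp_tree_nodes D \<alpha> \<sigma> f0. (\<exists>f \<in> K. e \<inter> f \<noteq> {}) \<and> (\<exists>g \<in> cm_faces D \<alpha> \<sigma> - K. e \<inter> g \<noteq> {})} \<le> 8"
proof -
  let ?p = "\<sigma> \<circ> \<alpha>"
  let ?lev = "\<lambda>x. fv_level D \<alpha> \<sigma> f0 x"
  let ?S = "share_rel D \<alpha> \<sigma> f0"
  have cm: "comb_map D \<alpha> \<sigma>" using pg by (rule pg_cm)
  have fD: "finite D" using cm by (rule cm_fin)
  have bp: "bij_betw ?p D D" by (rule phi_bij[OF cm])
  have ba: "bij_betw \<alpha> D D" by (rule cm_ba[OF cm])
  obtain d where d: "d \<in> D" and ed: "e = orb \<alpha> d" using e unfolding cm_edges_def by blast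
  have eq: "e = {d, \<alpha> d}" using edge_orb[OF cm d] ed by simp
  have adD: "\<alpha> d \<in> D" by (rule bij_betw_apply[OF ba d])
  have aad: "\<alpha> (\<alpha> d) = d" using cm_inv[OF cm d] by blast
  define F1 where "F1 = orb ?p d"
  define F2 where "F2 = orb ?p (\<alpha> d)"
  define v where "v = orb \<sigma> d"
  have vV: "v \<in> cm_verts D \<sigma>" unfolding v_def cm_verts_def using d by blast
  have vF1: "v \<inter> F1 \<noteq> {}" unfolding v_def F1_def using orb_self[of d \<sigma>] orb_self[of d ?p] by blast
  have "?p (\<alpha> d) = \<sigma> d" using aad by simp
  then have "\<sigma> d \<in> F2" unfolding F2_def using orb_step[of ?p "\<alpha> d"] by simp
  then have vF2: "v \<inter> F2 \<noteq> {}" unfolding v_def using orb_step[of \<sigma> d] by blast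
  have touch: "g = F1 \<or> g = F2" if tg: "g \<in> cm_faces D \<alpha> \<sigma>" "e \<inter> g \<noteq> {}" for g
  proof -
    obtain x where x: "x \<in> D" "g = orb ?p x" using tg(1) unfolding cm_faces_def by blast
    obtain z where z: "z \<in> e" "z \<in> g" using tg(2) by blast
    have "orb ?p z = g" using orb_eq[OF fD bp x(1)] z(2) x(2) by simp
    moreover have "z = d \<or> z = \<alpha> d" using z(1) eq by simp
    ultimately show ?thesis unfolding F1_def F2_def by blast
  qed
  have vtouch: "v \<inter> g \<noteq> {}" if "g = F1 \<or> g = F2" for g using that vF1 vF2 by blast
  let ?A = "{F1, F2} \<times> {F1, F2} \<times> {1::nat, 2}"
  let ?h = "\<lambda>(f, g, j). level_comp D \<alpha> \<sigma> f0 (?lev (Inr g) + j) f"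
  have sub: "{K \<in> comp_tree_nodes D \<alpha> \<sigma> f0. (\<exists>f \<in> K. e \<inter> f \<noteq> {}) \<and> (\<exists>g \<in> cm_faces D \<alpha> \<sigma> - K. e \<inter> g \<noteq> {})}
      \<subseteq> ?h ` ?A"
  proof
    fix K assume "K \<in> {K \<in> comp_tree_nodes D \<alpha> \<sigma> f0. (\<exists>f \<in> K. e \<inter> f \<noteq> {}) \<and> (\<exists>g \<in> cm_faces D \<alpha> \<sigma> - K. e \<inter> g \<noteq> {})}"
    then have KN: "K \<in> comp_tree_nodes D \<alpha> \<sigma> f0"
      and bd1: "\<exists>f \<in> K. e \<inter> f \<noteq> {}" and bd2: "\<exists>g \<in> cm_faces D \<alpha> \<sigma> - K. e \<inter> g \<noteq> {}"
      by auto
    obtain i h where K: "K = level_comp D \<alpha> \<sigma> f0 i h" and i2: "2 \<le> i"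
      using KN unfolding comp_tree_nodes_def by blast
    obtain f where f: "f \<in> K" "e \<inter> f \<noteq> {}" using bd1 by blast
    obtain g where g: "g \<in> cm_faces D \<alpha> \<sigma>" "g \<notin> K" "e \<inter> g \<noteq> {}" using bd2 by blast
    have fge: "f \<in> faces_ge D \<alpha> \<sigma> f0 i" and hf: "(h, f) \<in> (?S i)\<^sup>*"
      using f(1) unfolding K level_comp_def by auto
    have fF: "f \<in> cm_faces D \<alpha> \<sigma>" and fl: "i \<le> ?lev (Inr f)" using fge unfolding faces_ge_def by auto
    have f12: "f = F1 \<or> f = F2" by (rule touch[OF fF f(2)])
    have g12: "g = F1 \<or> g = F2" by (rule touch[OF g(1) g(3)])
    have gl: "?lev (Inr g) < i"
    proof (rule ccontr)
      assume "\<not> ?lev (Inr g) < i"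
      then have gge: "g \<in> faces_ge D \<alpha> \<sigma> f0 i" using g(1) unfolding faces_ge_def by simp
      have "(f, g) \<in> ?S i" unfolding share_rel_def
        using fge gge vV vtouch[OF f12] vtouch[OF g12] by blast
      then have "(h, g) \<in> (?S i)\<^sup>*" using hf by (rule rtrancl.rtrancl_into_rtrancl[rotated])
      then have "g \<in> K" unfolding K level_comp_def using gge by blast
      then show False using g(2) by simp
    qed
    have "?lev (Inr f) \<le> ?lev (Inr g) + 2"
      by (rule level_adj[OF vV g(1) fF vtouch[OF g12] vtouch[OF f12]]) (use gl fl in linarith)
    define j where "j = i - ?lev (Inr g)"
    have j: "j \<in> {1, 2}" "i = ?lev (Inr g) + j" using gl fl \<open>?lev (Inr f) \<le> ?lev (Inr g) + 2\<close>
      unfolding j_def by auto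
    have "K = level_comp D \<alpha> \<sigma> f0 i f" unfolding K by (rule lc_eq[OF hf])
    then have "K = ?h (f, g, j)" using j(2) by simp
    moreover have "(f, g, j) \<in> ?A" using f12 g12 j(1) by blast
    ultimately show "K \<in> ?h ` ?A" by (rule image_eqI)
  qed
  have fA: "finite ?A" by simp
  have "card (?h ` ?A) \<le> card ?A" by (rule card_image_le[OF fA])
  also have "card ?A = card {F1, F2} * (card {F1, F2} * card {1::nat, 2})" by (simp only: card_cartesian_product)
  also have "\<dots> \<le> 2 * (2 * 2)"
  proof -
    have c: "card {F1, F2} \<le> 2" by (simp add: card_insert_if)
    have "card {1::nat, 2} = 2" by simp
    then show ?thesis by (simp only:) (rule mult_le_mono[OF c mult_le_mono[OF c order_refl]])
  qed
  finally have "card (?h ` ?A) \<le> 8" by simp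
  moreover have "finite (?h ` ?A)" using fA by simp
  ultimately show ?thesis using card_mono[OF _ sub] by linarith
qed




lemma card_swap:
  assumes "finite A" "finite B"
  shows "(\<Sum>a\<in>A. card {b \<in> B. P a b}) = (\<Sum>b\<in>B. card {a \<in> A. P a b})"
proof -
  have 1: "card {b \<in> B. P a b} = (\<Sum>b\<in>B. if P a b then 1 else 0)" for a
    using assms(2) by (simp add: sum.inter_filter[symmetric])
  have 2: "card {a \<in> A. P a b} = (\<Sum>a\<in>A. if P a b then 1 else 0)" for b
    using assms(1) by (simp add: sum.inter_filter[symmetric])
  show ?thesis unfolding 1 2 by (rule sum.swap)
qed

lemma total_cost:
  assumes pg: "plane_graph_tri D \<alpha> \<sigma> f0"
  shows "(\<Sum>K \<in> comp_tree_nodes D \<alpha> \<sigma> f0. node_cost D \<alpha> \<sigma> K) \<le> 24 * card (cm_verts D \<sigma>)"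
proof -
  have cm: "comb_map D \<alpha> \<sigma>" using pg by (rule pg_cm)
  have fN: "finite (comp_tree_nodes D \<alpha> \<sigma> f0)" by (rule nodes_finite[OF cm])
  have fE: "finite (cm_edges D \<alpha>)" by (rule edges_finite[OF cm])
  have "(\<Sum>K \<in> comp_tree_nodes D \<alpha> \<sigma> f0. node_cost D \<alpha> \<sigma> K)
     = (\<Sum>e \<in> cm_edges D \<alpha>. card {K \<in> comp_tree_nodes D \<alpha> \<sigma> f0. (\<exists>f \<in> K. e \<inter> f \<noteq> {}) \<and> (\<exists>g \<in> cm_faces D \<alpha> \<sigma> - K. e \<inter> g \<noteq> {})})"
    unfolding node_cost_def by (rule card_swap[OF fN fE])
  also have "\<dots> \<le> (\<Sum>e \<in> cm_edges D \<alpha>. 8)"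
    by (rule sum_mono) (rule edge_count[OF pg])
  also have "\<dots> = 8 * card (cm_edges D \<alpha>)" by simp
  also have "\<dots> \<le> 24 * card (cm_verts D \<sigma>)" using edges_bound[OF pg] by simp
  finally show ?thesis .
qed

lemma avg:
  fixes h :: "'a \<Rightarrow> real" and g :: "'a \<Rightarrow> nat"
  assumes fN: "finite N" and w: "w \<ge> 1"
  shows "\<exists>\<delta><w. (\<Sum>K \<in> {K \<in> N. g K mod w = \<delta>}. h K) \<le> (\<Sum>K \<in> N. h K) / real w"
proof (rule ccontr)
  assume "\<not> ?thesis"
  then have gt: "\<And>\<delta>. \<delta> \<in> {..<w} \<Longrightarrow> (\<Sum>K \<in> N. h K) / real w < (\<Sum>K \<in> {K \<in> N. g K mod w = \<delta>}. h K)"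
    by (simp add: not_le)
  have ne: "{..<w} \<noteq> {}" using w lessThan_empty_iff by (metis not_one_le_zero)
  have "(\<Sum>\<delta>\<in>{..<w}. (\<Sum>K \<in> N. h K) / real w) < (\<Sum>\<delta>\<in>{..<w}. (\<Sum>K \<in> {K \<in> N. g K mod w = \<delta>}. h K))"
    by (rule sum_strict_mono[OF finite_lessThan ne gt])
  also have "\<dots> = (\<Sum>K \<in> N. h K)"
  proof -
    have "(\<lambda>K. g K mod w) ` N \<subseteq> {..<w}" using w by auto
    then show ?thesis using sum.group[OF fN finite_lessThan, where g="\<lambda>K. g K mod w" and h=h] by simp
  qed
  finally show False using w by simp
qed

lemma main_bound:
  assumes pg: "plane_graph_tri D \<alpha> \<sigma> f0" and w: "(w::nat) \<ge> 1"
  shows "\<exists>\<delta><w. (\<Sum>K \<in> {K \<in> comp_tree_nodes D \<alpha> \<sigma> f0. node_depth D \<alpha> \<sigma> f0 K mod w = \<delta>}.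
              real (node_cost D \<alpha> \<sigma> K))
            \<le> 24 * real (card (cm_verts D \<sigma>)) / real w"
proof -
  have fN: "finite (comp_tree_nodes D \<alpha> \<sigma> f0)" by (rule nodes_finite[OF pg_cm[OF pg]])
  obtain \<delta> where \<delta>: "\<delta> < w"
    "(\<Sum>K \<in> {K \<in> comp_tree_nodes D \<alpha> \<sigma> f0. node_depth D \<alpha> \<sigma> f0 K mod w = \<delta>}. real (node_cost D \<alpha> \<sigma> K))
      \<le> (\<Sum>K \<in> comp_tree_nodes D \<alpha> \<sigma> f0. real (node_cost D \<alpha> \<sigma> K)) / real w"
    using avg[OF fN w, where g="node_depth D \<alpha> \<sigma> f0" and h="\<lambda>K. real (node_cost D \<alpha> \<sigma> K)"] by blast
  have "(\<Sum>K \<in> comp_tree_nodes D \<alpha> \<sigma> f0. real (node_cost D \<alpha> \<sigma> K)) \<le> 24 * real (card (cm_verts D \<sigma>))"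
  proof -
    have "real (\<Sum>K \<in> comp_tree_nodes D \<alpha> \<sigma> f0. node_cost D \<alpha> \<sigma> K) \<le> real (24 * card (cm_verts D \<sigma>))"
      using total_cost[OF pg] by (simp only: of_nat_le_iff)
    then show ?thesis by simp
  qed
  then have "(\<Sum>K \<in> comp_tree_nodes D \<alpha> \<sigma> f0. real (node_cost D \<alpha> \<sigma> K)) / real w \<le> 24 * real (card (cm_verts D \<sigma>)) / real w"
    by (rule divide_right_mono) simp
  then show ?thesis using \<delta> by (meson order_trans)
qed

theorem lemma5:
  shows "\<exists>c::real. \<forall>D \<alpha> \<sigma> f0 (w::nat).
     plane_graph_tri D \<alpha> \<sigma> f0 \<and> w \<ge> 1 \<longrightarrow>
     (\<exists>\<delta><w. (\<Sum>K \<in> {K \<in> comp_tree_nodes D \<alpha> \<sigma> f0. node_depth D \<alpha> \<sigma> f0 K mod w = \<delta>}.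
              real (node_cost D \<alpha> \<sigma> K))
            \<le> c * real (card (cm_verts D \<sigma>)) / real w)"
  using main_bound by blast


end
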